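(* Let $A,Q\in\mathbb{R}^{n\times n}$, $B,L\in\mathbb{R}^{n\times m}$, $R\in\mathbb{R}^{m\times m}$, and $A_0^i\in\mathbb{R}^{n\times n}$, $B_0^i\in\mathbb{R}^{n\times m}$ ($i=1,\dots,r$), with $R\succ0$ and $\begin{bmatrix} Q & L\\ L^{\mathsf T} & R\end{bmatrix}\succeq 0$. For symmetric $X\succeq 0$ define $$\Omega(X)=\begin{bmatrix} -G_{\mathrm c}(X) & -A_{\mathrm c}(X)\\ -[A_{\mathrm c}(X)]^{\mathsf T} & H_{\mathrm c}(X)\end{bmatrix}\in\mathbb{R}^{2n\times 2n}.$$ Then $\Omega(X)\succeq\Omega(Y)$ for all symmetric $X,Y$ with $X\succeq Y\succeq 0$.
   Context: For symmetric $X$: $\Pi_{11}(X)=\sum_{i=1}^r (A_0^i)^{\mathsf T}XA_0^i$, $\Pi_{12}(X)=\sum_{i=1}^r (A_0^i)^{\mathsf T}XB_0^i$, $\Pi_{22}(X)=\sum_{i=1}^r (B_0^i)^{\mathsf T}XB_0^i$; $L_{\mathrm c}(X)=L+\Pi_{12}(X)$, $R_{\mathrm c}(X)=R+\Pi_{22}(X)$, $Q_{\mathrm c}(X)=Q+\Pi_{11}(X)$; $A_{\mathrm c}(X)=A-B[R_{\mathrm c}(X)]^{-1}[L_{\mathrm c}(X)]^{\mathsf T}$, $G_{\mathrm c}(X)=B[R_{\mathrm c}(X)]^{-1}B^{\mathsf T}$, $H_{\mathrm c}(X)=Q_{\mathrm c}(X)-L_{\mathrm c}(X)[R_{\mathrm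 c}(X)]^{-1}[L_{\mathrm c}(X)]^{\mathsf T}$. $\succeq$ is the Loewner order on symmetric matrices. *)

theory Defs
  imports "HOL-Analysis.Analysis"
begin

definition sym_mat :: "real^'n^'n \<Rightarrow> bool" where
  "sym_mat M \<longleftrightarrow> transpose M = M"

definition psd :: "real^'n^'n \<Rightarrow> bool" where
  "psd M \<longleftrightarrow> sym_mat M \<and> (\<forall>x. 0 \<le> x \<bullet> (M *v x))"

definition pd :: "real^'n^'n \<Rightarrow> bool" where
  "pd M \<longleftrightarrow> sym_mat M \<and> (\<forall>x. x \<noteq> 0 \<longrightarrow> 0 < x \<bullet> (M *v x))"

definition loewner_ge :: "real^'n^'n \<Rightarrow> real^'n^'n \<Rightarrow> bool" (infix "\<succeq>\<^sub>L" 50) where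
  "X \<succeq>\<^sub>L Y \<longleftrightarrow> sym_mat X \<and> sym_mat Y \<and> psd (X - Y)"

definition block_mat ::
  "real^'a^'a \<Rightarrow> real^'b^'a \<Rightarrow> real^'a^'b \<Rightarrow> real^'b^'b \<Rightarrow> real^('a + 'b)^('a + 'b)" where
  "block_mat P M N S = (\<chi> i j. case i of
      Inl i' \<Rightarrow> (case j of Inl j' \<Rightarrow> P $ i' $ j' | Inr j' \<Rightarrow> M $ i' $ j')
    | Inr i' \<Rightarrow> (case j of Inl j' \<Rightarrow> N $ i' $ j' | Inr j' \<Rightarrow> S $ i' $ j'))"

text \<open>The operators of the paper; the r pairs (A_0^i, B_0^i) are indexed by i < r.\<close>

definition Pi11 :: "nat \<Rightarrow> (nat \<Rightarrow> real^'n^'n) \<Rightarrow> real^'n^'n \<Rightarrow> real^'n^'n" where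
  "Pi11 r A0 X = (\<Sum>i<r. transpose (A0 i) ** X ** A0 i)"

definition Pi12 :: "nat \<Rightarrow> (nat \<Rightarrow> real^'n^'n) \<Rightarrow> (nat \<Rightarrow> real^'m^'n) \<Rightarrow> real^'n^'n \<Rightarrow> real^'m^'n" where
  "Pi12 r A0 B0 X = (\<Sum>i<r. transpose (A0 i) ** X ** B0 i)"

definition Pi22 :: "nat \<Rightarrow> (nat \<Rightarrow> real^'m^'n) \<Rightarrow> real^'n^'n \<Rightarrow> real^'m^'m" where
  "Pi22 r B0 X = (\<Sum>i<r. transpose (B0 i) ** X ** B0 i)"

definition Lc where "Lc L r A0 B0 X = L + Pi12 r A0 B0 X"
definition Rc where "Rc R r B0 X = R + Pi22 r B0 X"
definition Qc where "Qc Q r A0 X = Q + Pi11 r A0 X"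

definition Ac :: "real^'n^'n \<Rightarrow> real^'m^'n \<Rightarrow> real^'m^'n \<Rightarrow> real^'m^'m \<Rightarrow> nat \<Rightarrow>
    (nat \<Rightarrow> real^'n^'n) \<Rightarrow> (nat \<Rightarrow> real^'m^'n) \<Rightarrow> real^'n^'n \<Rightarrow> real^'n^'n" where
  "Ac A B L R r A0 B0 X = A - B ** matrix_inv (Rc R r B0 X) ** transpose (Lc L r A0 B0 X)"

definition Gc :: "real^'m^'n \<Rightarrow> real^'m^'m \<Rightarrow> nat \<Rightarrow> (nat \<Rightarrow> real^'m^'n) \<Rightarrow> real^'n^'n \<Rightarrow> real^'n^'n" where
  "Gc B R r B0 X = B ** matrix_inv (Rc R r B0 X) ** transpose B"

definition Hc :: "real^'n^'n \<Rightarrow> real^'m^'n \<Rightarrow> real^'m^'m \<Rightarrow> nat \<Rightarrow>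
    (nat \<Rightarrow> real^'n^'n) \<Rightarrow> (nat \<Rightarrow> real^'m^'n) \<Rightarrow> real^'n^'n \<Rightarrow> real^'n^'n" where
  "Hc Q L R r A0 B0 X = Qc Q r A0 X - Lc L r A0 B0 X ** matrix_inv (Rc R r B0 X) ** transpose (Lc L r A0 B0 X)"

definition Omega :: "real^'n^'n \<Rightarrow> real^'m^'n \<Rightarrow> real^'n^'n \<Rightarrow> real^'m^'n \<Rightarrow> real^'m^'m \<Rightarrow> nat \<Rightarrow>
    (nat \<Rightarrow> real^'n^'n) \<Rightarrow> (nat \<Rightarrow> real^'m^'n) \<Rightarrow> real^'n^'n \<Rightarrow> real^('n + 'n)^('n + 'n)" where
  "Omega A B Q L R r A0 B0 X =
     block_mat (- Gc B R r B0 X) (- Ac A B L R r A0 B0 X)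
               (- transpose (Ac A B L R r A0 B0 X)) (Hc Q L R r A0 B0 X)"

end

theory Submission
  imports Defs
begin

lemma dot_transpose_left: "x \<bullet> (transpose P *v z) = (P *v x) \<bullet> (z::real^'a)"
proof -
  have "x \<bullet> (transpose P *v z) = (z v* P) \<bullet> x" by (simp add: inner_commute)
  also have "\<dots> = z \<bullet> (P *v x)" by (rule dot_lmul_matrix)
  finally show ?thesis by (simp add: inner_commute)
qed

lemma dot_move: "x \<bullet> (P *v z) = (transpose P *v x) \<bullet> (z::real^'a)"
  using dot_transpose_left[of x "transpose P" z] by simp

lemma qf_sand: "x \<bullet> ((transpose P ** X ** P') *v y) = (P *v x) \<bullet> (X *v (P' *v (y::real^'a)))"
proof -
  have "(transpose P ** X ** P') *v y = transpose P *v (X *v (P' *v y))"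
    by (simp add: matrix_vector_mul_assoc matrix_mul_assoc)
  then show ?thesis using dot_transpose_left by metis
qed

lemma mv_sum: "finite S \<Longrightarrow> (sum M S) *v y = (\<Sum>i\<in>S. M i *v (y::real^'a))"
  by (induct S rule: finite_induct) (auto simp: matrix_vector_mult_add_rdistrib)

lemma transpose_add': "transpose (P + M) = transpose P + transpose (M::real^'a^'b)"
  by (simp add: vec_eq_iff transpose_def)
lemma transpose_diff': "transpose (P - M) = transpose P - transpose (M::real^'a^'b)"
  by (simp add: vec_eq_iff transpose_def)
lemma transpose_uminus': "transpose (- M) = - transpose (M::real^'a^'b)"
  by (simp add: vec_eq_iff transpose_def)
lemma transpose_zero': "transpose (0::real^'a^'b) = 0"
  by (simp add: vec_eq_iff transpose_def)
lemma transpose_sum': "finite S \<Longrightarrow> transpose (sum M S) = (\<Sum>i\<in>S. transpose (M i::real^'a^'b))"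
  by (induct S rule: finite_induct) (auto simp: transpose_add' transpose_zero')

lemma sym_dot: "sym_mat M \<Longrightarrow> x \<bullet> (M *v y) = y \<bullet> (M *v x)"
  using dot_move[of x M y] unfolding sym_mat_def by (simp add: inner_commute)

lemma sym_sand: "sym_mat X \<Longrightarrow> sym_mat (transpose P ** X ** P)"
  unfolding sym_mat_def by (simp add: matrix_transpose_mul matrix_mul_assoc)

lemma sym_sum: "(\<And>i. i \<in> S \<Longrightarrow> sym_mat (M i)) \<Longrightarrow> finite S \<Longrightarrow> sym_mat (sum M S)"
  unfolding sym_mat_def by (simp add: transpose_sum')

lemma transpose_block: "transpose (block_mat P M N S) = block_mat (transpose P) (transpose N) (transpose M) (transpose S)"
  by (simp add: vec_eq_iff transpose_def block_mat_def split: sum.split)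

lemma block_qf: "z \<bullet> (block_mat P M N S *v z) =
   (\<chi> i. z $ Inl i) \<bullet> (P *v (\<chi> i. z $ Inl i)) + (\<chi> i. z $ Inl i) \<bullet> (M *v (\<chi> i. z $ Inr i))
 + (\<chi> i. z $ Inr i) \<bullet> (N *v (\<chi> i. z $ Inl i)) + (\<chi> i. z $ Inr i) \<bullet> (S *v (\<chi> i. z $ Inr i))"
  unfolding inner_vec_def matrix_vector_mult_def block_mat_def
  by (simp add: UNIV_Plus_UNIV[symmetric] sum.Plus sum_distrib_left sum.distrib algebra_simps del: UNIV_Plus_UNIV)

lemma pd_inv:
  fixes R :: "real^'a^'a"
  assumes "pd R"
  shows "R ** matrix_inv R = mat 1" "matrix_inv R ** R = mat 1" "transpose (matrix_inv R) = matrix_inv R"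
proof -
  have "\<forall>x. R *v x = 0 \<longrightarrow> x = 0"
    using assms unfolding pd_def by (metis inner_zero_right less_irrefl)
  then have "invertible R" using matrix_left_invertible_ker invertible_left_inverse by blast
  then have "R ** matrix_inv R = mat 1 \<and> matrix_inv R ** R = mat 1"
    unfolding invertible_def matrix_inv_def by (rule someI_ex)
  then show 1: "R ** matrix_inv R = mat 1" and 2: "matrix_inv R ** R = mat 1" by auto
  have sR: "transpose R = R" using assms unfolding pd_def sym_mat_def by auto
  have "transpose (matrix_inv R) ** R = mat 1"
    using 1 by (metis matrix_transpose_mul sR transpose_mat)
  then have "transpose (matrix_inv R) ** R ** matrix_inv R = matrix_inv R" by simp
  then show "transpose (matrix_inv R) = matrix_inv R"
    using 1 by (simp add: matrix_mul_assoc[symmetric])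
qed

lemma min_lemma:
  fixes R :: "real^'a^'a"
  assumes "pd R"
  shows "-(c \<bullet> (matrix_inv R *v c)) \<le> 2*(c \<bullet> w) + w \<bullet> (R *v w)"
    and "-(c \<bullet> (matrix_inv R *v c)) = 2*(c \<bullet> (-(matrix_inv R *v c))) + (-(matrix_inv R *v c)) \<bullet> (R *v (-(matrix_inv R *v c)))"
proof -
  define d where "d = matrix_inv R *v c"
  have Rd: "R *v d = c" unfolding d_def using pd_inv(1)[OF assms]
    by (simp add: matrix_vector_mul_assoc)
  have sR: "sym_mat R" using assms unfolding pd_def by auto
  have "0 \<le> (w + d) \<bullet> (R *v (w + d))" using assms unfolding pd_def
    by (metis inner_zero_left less_eq_real_def)
  also have "\<dots> = w \<bullet> (R *v w) + w \<bullet> (R *v d) + d \<bullet> (R *v w) + d \<bullet> (R *v d)"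
    by (simp add: matrix_vector_right_distrib inner_add_left inner_add_right)
  also have "d \<bullet> (R *v w) = w \<bullet> (R *v d)" using sym_dot[OF sR] by blast
  finally have "0 \<le> w \<bullet> (R *v w) + 2 * (c \<bullet> w) + c \<bullet> d" using Rd by (simp add: inner_commute[of d c] inner_commute[of w c])
  then show "-(c \<bullet> (matrix_inv R *v c)) \<le> 2*(c \<bullet> w) + w \<bullet> (R *v w)" unfolding d_def by simp
  have "R *v (-d) = R *v (0 - d)" by simp
  also have "\<dots> = R *v 0 - R *v d" by (rule matrix_vector_mult_diff_distrib)
  also have "\<dots> = - c" using Rd by simp
  finally have "R *v (-d) = - c" .
  then have "(-d) \<bullet> (R *v (-d)) = c \<bullet> d" using Rd by (simp add: inner_commute[of d c] inner_commute[of w c])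
  then show "-(c \<bullet> (matrix_inv R *v c)) = 2*(c \<bullet> (-(matrix_inv R *v c))) + (-(matrix_inv R *v c)) \<bullet> (R *v (-(matrix_inv R *v c)))"
    unfolding d_def[symmetric] by simp
qed

lemma omega_form:
  fixes u v :: "real^'n" and A Q :: "real^'n^'n" and B L :: "real^'m^'n" and Ri :: "real^'m^'m"
  assumes sRi: "sym_mat Ri"
  shows "-(u \<bullet> ((B ** Ri ** transpose B) *v u)) - u \<bullet> ((A - B ** Ri ** transpose L) *v v)
     - v \<bullet> (transpose (A - B ** Ri ** transpose L) *v u) + v \<bullet> ((Q - L ** Ri ** transpose L) *v v)
   = -(2*(u \<bullet> (A *v v))) + v \<bullet> (Q *v v)
     - (transpose L *v v - transpose B *v u) \<bullet> (Ri *v (transpose L *v v - transpose B *v u))"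
proof -
  define a where "a = transpose B *v u"
  define b where "b = transpose L *v v"
  have T1: "u \<bullet> ((B ** Ri ** transpose B) *v u) = a \<bullet> (Ri *v a)"
    unfolding a_def using qf_sand[of u "transpose B" Ri "transpose B" u] by simp
  have T2a: "u \<bullet> ((B ** Ri ** transpose L) *v v) = a \<bullet> (Ri *v b)"
    unfolding a_def b_def using qf_sand[of u "transpose B" Ri "transpose L" v] by simp
  have T2: "u \<bullet> ((A - B ** Ri ** transpose L) *v v) = u \<bullet> (A *v v) - a \<bullet> (Ri *v b)"
    using T2a by (simp add: matrix_vector_mult_diff_rdistrib inner_diff_right)
  have T3: "v \<bullet> (transpose (A - B ** Ri ** transpose L) *v u) = u \<bullet> ((A - B ** Ri ** transpose L) *v v)"
  proof -
    have "v \<bullet> (transpose (A - B ** Ri ** transpose L) *v u) = ((A - B ** Ri ** transpose L) *v v) \<bullet> u"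
      by (rule dot_transpose_left)
    also have "\<dots> = u \<bullet> ((A - B ** Ri ** transpose L) *v v)" by (rule inner_commute)
    finally show ?thesis .
  qed
  have T4a: "v \<bullet> ((L ** Ri ** transpose L) *v v) = b \<bullet> (Ri *v b)"
    unfolding b_def using qf_sand[of v "transpose L" Ri "transpose L" v] by simp
  have T4: "v \<bullet> ((Q - L ** Ri ** transpose L) *v v) = v \<bullet> (Q *v v) - b \<bullet> (Ri *v b)"
    using T4a by (simp add: matrix_vector_mult_diff_rdistrib inner_diff_right)
  have S: "b \<bullet> (Ri *v a) = a \<bullet> (Ri *v b)" using sym_dot[OF sRi] by blast
  have C: "(b - a) \<bullet> (Ri *v (b - a)) = b \<bullet> (Ri *v b) - 2 * (a \<bullet> (Ri *v b)) + a \<bullet> (Ri *v a)"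
  proof -
    have "Ri *v (b - a) = Ri *v b - Ri *v a" by (rule matrix_vector_mult_diff_distrib)
    then have "(b - a) \<bullet> (Ri *v (b - a)) = b \<bullet> (Ri *v b) - b \<bullet> (Ri *v a) - (a \<bullet> (Ri *v b) - a \<bullet> (Ri *v a))"
      by (simp only: inner_diff_left inner_diff_right)
    then show ?thesis using S by simp
  qed
  show ?thesis
    unfolding a_def[symmetric] b_def[symmetric] T1 T2 T3 T4 C by simp
qed

lemma mv_uminus: "(- M) *v x = - (M *v (x::real^'a))"
  by (simp add: vec_eq_iff matrix_vector_mult_def sum_negf)

lemma qf_sum: "x \<bullet> ((\<Sum>i<(r::nat). transpose (P i) ** X ** P' i) *v y) = (\<Sum>i<r. (P i *v x) \<bullet> (X *v (P' i *v (y::real^'a))))"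
proof -
  have "(\<Sum>i<r. transpose (P i) ** X ** P' i) *v y = (\<Sum>i<r. (transpose (P i) ** X ** P' i) *v y)"
    by (rule mv_sum) simp
  then show ?thesis by (simp only: inner_sum_right qf_sand)
qed

lemma Pi11_qf: "v \<bullet> (Pi11 r A0 X *v v) = (\<Sum>i<r. (A0 i *v v) \<bullet> (X *v (A0 i *v v)))"
  unfolding Pi11_def by (rule qf_sum)
lemma Pi12_qf: "v \<bullet> (Pi12 r A0 B0 X *v w) = (\<Sum>i<r. (A0 i *v v) \<bullet> (X *v (B0 i *v w)))"
  unfolding Pi12_def by (rule qf_sum)
lemma Pi22_qf: "w \<bullet> (Pi22 r B0 X *v w) = (\<Sum>i<r. (B0 i *v w) \<bullet> (X *v (B0 i *v w)))"
  unfolding Pi22_def by (rule qf_sum)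

lemma Pi11_sym: "sym_mat X \<Longrightarrow> sym_mat (Pi11 r A0 X)"
  unfolding Pi11_def by (rule sym_sum) (auto intro: sym_sand)
lemma Pi22_sym: "sym_mat X \<Longrightarrow> sym_mat (Pi22 r B0 X)"
  unfolding Pi22_def by (rule sym_sum) (auto intro: sym_sand)

lemma psd_qf: "psd X \<Longrightarrow> 0 \<le> x \<bullet> (X *v x)"
  unfolding psd_def by auto

lemma Rc_pd:
  assumes "pd R" "psd X"
  shows "pd (Rc R r B0 X)"
proof -
  have sX: "sym_mat X" using assms(2) unfolding psd_def by auto
  have "sym_mat (Rc R r B0 X)" using assms(1) Pi22_sym[OF sX, of r B0]
    unfolding Rc_def sym_mat_def pd_def by (simp add: transpose_add')
  moreover have "0 < x \<bullet> (Rc R r B0 X *v x)" if "x \<noteq> 0" for x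
  proof -
    have "0 < x \<bullet> (R *v x)" using assms(1) that unfolding pd_def by auto
    moreover have "0 \<le> x \<bullet> (Pi22 r B0 X *v x)" unfolding Pi22_qf
      by (rule sum_nonneg) (rule psd_qf[OF assms(2)])
    ultimately show ?thesis unfolding Rc_def
      by (simp add: matrix_vector_mult_add_rdistrib inner_add_right)
  qed
  ultimately show ?thesis unfolding pd_def by auto
qed

lemma Omega_sym:
  assumes "pd (Rc R r B0 X)" "sym_mat Q" "sym_mat X"
  shows "sym_mat (Omega A B Q L R r A0 B0 X)"
proof -
  define Ri where "Ri = matrix_inv (Rc R r B0 X)"
  have sRi: "transpose Ri = Ri" unfolding Ri_def by (rule pd_inv(3)[OF assms(1)])
  have G: "transpose (Gc B R r B0 X) = Gc B R r B0 X"
    unfolding Gc_def Ri_def[symmetric] using sRi by (simp add: matrix_transpose_mul matrix_mul_assoc)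
  have sQc: "transpose (Qc Q r A0 X) = Qc Q r A0 X"
    using assms(2) Pi11_sym[OF assms(3), of r A0] unfolding Qc_def sym_mat_def by (simp add: transpose_add')
  have H: "transpose (Hc Q L R r A0 B0 X) = Hc Q L R r A0 B0 X"
    unfolding Hc_def Ri_def[symmetric] using sRi sQc by (simp add: transpose_diff' matrix_transpose_mul matrix_mul_assoc)
  show ?thesis unfolding sym_mat_def Omega_def transpose_block
    by (simp add: transpose_uminus' G H)
qed

lemma Omega_qf:
  assumes "pd (Rc R r B0 X)"
  shows "z \<bullet> (Omega A B Q L R r A0 B0 X *v z) =
    -(2*((\<chi> i. z $ Inl i) \<bullet> (A *v (\<chi> i. z $ Inr i)))) + (\<chi> i. z $ Inr i) \<bullet> (Qc Q r A0 X *v (\<chi> i. z $ Inr i))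
     - (transpose (Lc L r A0 B0 X) *v (\<chi> i. z $ Inr i) - transpose B *v (\<chi> i. z $ Inl i)) \<bullet>
       (matrix_inv (Rc R r B0 X) *v (transpose (Lc L r A0 B0 X) *v (\<chi> i. z $ Inr i) - transpose B *v (\<chi> i. z $ Inl i)))"
proof -
  have sRi: "sym_mat (matrix_inv (Rc R r B0 X))" unfolding sym_mat_def by (rule pd_inv(3)[OF assms(1)])
  show ?thesis
    unfolding Omega_def block_qf Gc_def Ac_def Hc_def mv_uminus inner_minus_right transpose_uminus'
    using omega_form[OF sRi, of "\<chi> i. z $ Inl i" B A "Lc L r A0 B0 X" "\<chi> i. z $ Inr i" "Qc Q r A0 X"]
    by simp
qed

lemma pair_ineq:
  assumes "psd (X - Y)" "sym_mat X" "sym_mat Y"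
  shows "0 \<le> (p \<bullet> (X *v p) + 2*(p \<bullet> (X *v q)) + q \<bullet> (X *v q)) - (p \<bullet> (Y *v p) + 2*(p \<bullet> (Y *v q)) + q \<bullet> (Y *v q))"
proof -
  have e: "(p+q) \<bullet> (M *v (p+q)) = p \<bullet> (M *v p) + 2*(p \<bullet> (M *v q)) + q \<bullet> (M *v q)" if "sym_mat M" for M :: "real^'a^'a"
  proof -
    have "q \<bullet> (M *v p) = p \<bullet> (M *v q)" using sym_dot[OF that] by blast
    then show ?thesis by (simp add: matrix_vector_right_distrib inner_add_left inner_add_right)
  qed
  have "0 \<le> (p+q) \<bullet> ((X - Y) *v (p+q))" by (rule psd_qf[OF assms(1)])
  also have "\<dots> = (p+q) \<bullet> (X *v (p+q)) - (p+q) \<bullet> (Y *v (p+q))"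
    by (simp add: matrix_vector_mult_diff_rdistrib inner_diff_right)
  finally show ?thesis using e[OF assms(2)] e[OF assms(3)] by simp
qed

lemma Phi_expand:
  "v \<bullet> (Qc Q r A0 Z *v v) + 2 * ((transpose (Lc L r A0 B0 Z) *v v - transpose B *v u) \<bullet> w) + w \<bullet> (Rc R r B0 Z *v w)
   = v \<bullet> (Q *v v) + 2 * (v \<bullet> (L *v w)) - 2 * ((transpose B *v u) \<bullet> w) + w \<bullet> (R *v w)
     + (\<Sum>i<r. (A0 i *v v) \<bullet> (Z *v (A0 i *v v)) + 2 * ((A0 i *v v) \<bullet> (Z *v (B0 i *v w))) + (B0 i *v w) \<bullet> (Z *v (B0 i *v w)))"
proof -
  have 1: "v \<bullet> (Qc Q r A0 Z *v v) = v \<bullet> (Q *v v) + (\<Sum>i<r. (A0 i *v v) \<bullet> (Z *v (A0 i *v v)))"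
    unfolding Qc_def by (simp add: matrix_vector_mult_add_rdistrib inner_add_right Pi11_qf)
  have "(transpose (Lc L r A0 B0 Z) *v v) \<bullet> w = v \<bullet> (Lc L r A0 B0 Z *v w)"
    by (rule dot_move[symmetric])
  also have "\<dots> = v \<bullet> (L *v w) + (\<Sum>i<r. (A0 i *v v) \<bullet> (Z *v (B0 i *v w)))"
    unfolding Lc_def by (simp add: matrix_vector_mult_add_rdistrib inner_add_right Pi12_qf)
  finally have 2: "(transpose (Lc L r A0 B0 Z) *v v - transpose B *v u) \<bullet> w
     = v \<bullet> (L *v w) + (\<Sum>i<r. (A0 i *v v) \<bullet> (Z *v (B0 i *v w))) - (transpose B *v u) \<bullet> w"
    by (simp only: inner_diff_left)
  have 3: "w \<bullet> (Rc R r B0 Z *v w) = w \<bullet> (R *v w) + (\<Sum>i<r. (B0 i *v w) \<bullet> (Z *v (B0 i *v w)))"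
    unfolding Rc_def by (simp add: matrix_vector_mult_add_rdistrib inner_add_right Pi22_qf)
  show ?thesis unfolding 1 2 3 by (simp add: sum.distrib sum_distrib_left algebra_simps)
qed

theorem lemma2p3:
  fixes A Q :: "real^'n^'n" and B L :: "real^'m^'n" and R :: "real^'m^'m"
    and r :: nat and A0 :: "nat \<Rightarrow> real^'n^'n" and B0 :: "nat \<Rightarrow> real^'m^'n"
    and X Y :: "real^'n^'n"
  assumes "pd R"
    and "psd (block_mat Q L (transpose L) R)"
    and "sym_mat X" and "sym_mat Y"
    and "X \<succeq>\<^sub>L Y" and "psd Y"
  shows "Omega A B Q L R r A0 B0 X \<succeq>\<^sub>L Omega A B Q L R r A0 B0 Y"
proof -
  have D: "psd (X - Y)" using assms(5) unfolding loewner_ge_def by auto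
  have pX: "psd X" unfolding psd_def
  proof (intro conjI allI)
    show "sym_mat X" by fact
    fix x :: "real^'n"
    have "x \<bullet> (X *v x) = x \<bullet> ((X - Y) *v x) + x \<bullet> (Y *v x)"
      by (simp add: matrix_vector_mult_diff_rdistrib inner_diff_right)
    then show "0 \<le> x \<bullet> (X *v x)" using psd_qf[OF D, of x] psd_qf[OF assms(6), of x] by linarith
  qed
  have sQ: "sym_mat Q" unfolding sym_mat_def
  proof -
    have "transpose (block_mat Q L (transpose L) R) = block_mat Q L (transpose L) R"
      using assms(2) unfolding psd_def sym_mat_def by auto
    then have "\<forall>i j. transpose (block_mat Q L (transpose L) R) $ Inl i $ Inl j = block_mat Q L (transpose L) R $ Inl i $ Inl j"
      by simp
    then show "transpose Q = Q" by (simp add: vec_eq_iff transpose_def block_mat_def)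
  qed
  have pdX: "pd (Rc R r B0 X)" by (rule Rc_pd[OF assms(1) pX])
  have pdY: "pd (Rc R r B0 Y)" by (rule Rc_pd[OF assms(1) assms(6)])
  have s1: "sym_mat (Omega A B Q L R r A0 B0 X)" by (rule Omega_sym[OF pdX sQ assms(3)])
  have s2: "sym_mat (Omega A B Q L R r A0 B0 Y)" by (rule Omega_sym[OF pdY sQ assms(4)])
  have "0 \<le> z \<bullet> ((Omega A B Q L R r A0 B0 X - Omega A B Q L R r A0 B0 Y) *v z)" for z
  proof -
    define u where "u = (\<chi> i. z $ Inl i)"
    define v where "v = (\<chi> i. z $ Inr i)"
    define cX where "cX = transpose (Lc L r A0 B0 X) *v v - transpose B *v u"
    define cY where "cY = transpose (Lc L r A0 B0 Y) *v v - transpose B *v u"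
    define w where "w = -(matrix_inv (Rc R r B0 X) *v cX)"
    have eX: "z \<bullet> (Omega A B Q L R r A0 B0 X *v z) = -(2*(u \<bullet> (A *v v))) + v \<bullet> (Qc Q r A0 X *v v) - cX \<bullet> (matrix_inv (Rc R r B0 X) *v cX)"
      unfolding u_def v_def cX_def by (rule Omega_qf[OF pdX])
    have eY: "z \<bullet> (Omega A B Q L R r A0 B0 Y *v z) = -(2*(u \<bullet> (A *v v))) + v \<bullet> (Qc Q r A0 Y *v v) - cY \<bullet> (matrix_inv (Rc R r B0 Y) *v cY)"
      unfolding u_def v_def cY_def by (rule Omega_qf[OF pdY])
    have mX: "-(cX \<bullet> (matrix_inv (Rc R r B0 X) *v cX)) = 2*(cX \<bullet> w) + w \<bullet> (Rc R r B0 X *v w)"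
      unfolding w_def by (rule min_lemma(2)[OF pdX])
    have mY: "-(cY \<bullet> (matrix_inv (Rc R r B0 Y) *v cY)) \<le> 2*(cY \<bullet> w) + w \<bullet> (Rc R r B0 Y *v w)"
      by (rule min_lemma(1)[OF pdY])
    have PX: "v \<bullet> (Qc Q r A0 X *v v) + 2 * (cX \<bullet> w) + w \<bullet> (Rc R r B0 X *v w)
      = v \<bullet> (Q *v v) + 2 * (v \<bullet> (L *v w)) - 2 * ((transpose B *v u) \<bullet> w) + w \<bullet> (R *v w)
     + (\<Sum>i<r. (A0 i *v v) \<bullet> (X *v (A0 i *v v)) + 2 * ((A0 i *v v) \<bullet> (X *v (B0 i *v w))) + (B0 i *v w) \<bullet> (X *v (B0 i *v w)))"
      unfolding cX_def by (rule Phi_expand)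
    have PY: "v \<bullet> (Qc Q r A0 Y *v v) + 2 * (cY \<bullet> w) + w \<bullet> (Rc R r B0 Y *v w)
      = v \<bullet> (Q *v v) + 2 * (v \<bullet> (L *v w)) - 2 * ((transpose B *v u) \<bullet> w) + w \<bullet> (R *v w)
     + (\<Sum>i<r. (A0 i *v v) \<bullet> (Y *v (A0 i *v v)) + 2 * ((A0 i *v v) \<bullet> (Y *v (B0 i *v w))) + (B0 i *v w) \<bullet> (Y *v (B0 i *v w)))"
      unfolding cY_def by (rule Phi_expand)
    have S: "0 \<le> (\<Sum>i<r. (A0 i *v v) \<bullet> (X *v (A0 i *v v)) + 2 * ((A0 i *v v) \<bullet> (X *v (B0 i *v w))) + (B0 i *v w) \<bullet> (X *v (B0 i *v w)))
       - (\<Sum>i<r. (A0 i *v v) \<bullet> (Y *v (A0 i *v v)) + 2 * ((A0 i *v v) \<bullet> (Y *v (B0 i *v w))) + (B0 i *v w) \<bullet> (Y *v (B0 i *v w)))"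
      unfolding sum_subtractf[symmetric]
      by (rule sum_nonneg) (rule pair_ineq[OF D assms(3) assms(4)])
    have "z \<bullet> ((Omega A B Q L R r A0 B0 X - Omega A B Q L R r A0 B0 Y) *v z)
       = z \<bullet> (Omega A B Q L R r A0 B0 X *v z) - z \<bullet> (Omega A B Q L R r A0 B0 Y *v z)"
      by (simp add: matrix_vector_mult_diff_rdistrib inner_diff_right)
    then show ?thesis using eX eY mX mY PX PY S by linarith
  qed
  then have "psd (Omega A B Q L R r A0 B0 X - Omega A B Q L R r A0 B0 Y)"
    using s1 s2 unfolding psd_def sym_mat_def by (simp add: transpose_diff')
  then show ?thesis unfolding loewner_ge_def using s1 s2 by auto
qed

end
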